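(* Let $n \ge 1$, let $\alpha_w, \alpha_n \in (0,1)$ with $\alpha_w < \alpha_n$, and let $w_1, \dots, w_n \in \mathbb{R}_{\ge 0}$ with $W := \sum_{i=1}^n w_i \neq 0$. Then there exist integers $t_1, \dots, t_n \in \mathbb{Z}_{\ge 0}$, with $T := \sum_{i=1}^n t_i$, such that for every $S \subseteq [n]$ with $w(S) < \alpha_w W$ we have $t(S) < \alpha_n T$, and $$T \le \left\lceil \frac{\alpha_w(1-\alpha_w)}{\alpha_n - \alpha_w}\, n \right\rceil.$$
   Context: $[n] := \{1,\dots,n\}$. For $S \subseteq [n]$, $w(S) := \sum_{i\in S} w_i$ and $t(S) := \sum_{i \in S} t_i$. (The Weight Restriction problem asks, given $\alpha_w,\alpha_n$ and the weights, to find nonnegative integers $t_1,\dots,t_n$ minimizing $T$ subject to the displayed constraint; the theorem asserts existence of a feasible assignment, equivalently of a solution, with $T$ bounded as stated.) *)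

theory Defs
  imports Complex_Main
begin

end

theory Submission
  imports Defs
begin

definition inv_wr :: "nat \<Rightarrow> real \<Rightarrow> (nat \<Rightarrow> real) \<Rightarrow> (nat \<Rightarrow> nat) \<Rightarrow> bool" where
  "inv_wr n aw w t \<longleftrightarrow> (\<forall>i\<in>{1..n}. \<forall>j\<in>{1..n}.
      (real (t i) - aw) * w j \<le> (real (t j) + 1 - aw) * w i)"

lemma greedy:
  fixes n :: nat and aw :: real and w :: "nat \<Rightarrow> real"
  assumes aw0: "0 < aw" and aw1: "aw < 1"
    and wnn: "\<forall>i\<in>{1..n}. w i \<ge> 0"
    and pos: "\<exists>i\<in>{1..n}. w i > 0"
  shows "\<exists>t. (\<Sum>i\<in>{1..n}. t i) = M \<and> inv_wr n aw w t"
proof (induction M)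
  case 0
  have "inv_wr n aw w (\<lambda>_. 0)"
    unfolding inv_wr_def
  proof (intro ballI)
    fix i j assume i: "i \<in> {1..n}" and j: "j \<in> {1..n}"
    have "(0 - aw) * w j \<le> 0" using wnn j aw0 by (simp add: mult_nonneg_nonneg)
    also have "0 \<le> (0 + 1 - aw) * w i" using wnn i aw1 by simp
    finally show "(real ((\<lambda>_. 0::nat) i) - aw) * w j \<le> (real ((\<lambda>_. 0::nat) j) + 1 - aw) * w i" by simp
  qed
  then show ?case by (intro exI[of _ "\<lambda>_. 0"]) simp
next
  case (Suc M)
  then obtain t where ts: "(\<Sum>i\<in>{1..n}. t i) = M" and it: "inv_wr n aw w t" by blast
  define P where "P = {i\<in>{1..n}. w i > 0}"
  define f where "f i = (real (t i) + 1 - aw) / w i" for i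
  have finP: "finite P" unfolding P_def by simp
  have neP: "P \<noteq> {}" using pos unfolding P_def by blast
  define m where "m = Min (f ` P)"
  have "m \<in> f ` P" unfolding m_def using finP neP by simp
  then obtain i0 where i0P: "i0 \<in> P" and fi0: "f i0 = m" by blast
  have minf: "f i0 \<le> f j" if "j \<in> P" for j
    using fi0 that finP unfolding m_def by simp
  have i0n: "i0 \<in> {1..n}" and wi0: "w i0 > 0" using i0P unfolding P_def by auto
  define t' where "t' = t(i0 := t i0 + 1)"
  have "(\<Sum>i\<in>{1..n}. t' i) = (\<Sum>i\<in>{1..n}. t i) + 1"
  proof -
    have "(\<Sum>i\<in>{1..n}. t' i) = t' i0 + (\<Sum>i\<in>{1..n} - {i0}. t' i)"
      using i0n by (simp add: sum.remove)
    also have "(\<Sum>i\<in>{1..n} - {i0}. t' i) = (\<Sum>i\<in>{1..n} - {i0}. t i)"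
      by (rule sum.cong) (auto simp: t'_def)
    also have "(\<Sum>i\<in>{1..n}. t i) = t i0 + (\<Sum>i\<in>{1..n} - {i0}. t i)"
      using i0n by (simp add: sum.remove)
    ultimately show ?thesis by (simp add: t'_def)
  qed
  hence s': "(\<Sum>i\<in>{1..n}. t' i) = Suc M" using ts by simp
  have "inv_wr n aw w t'"
    unfolding inv_wr_def
  proof (intro ballI)
    fix i j assume i: "i \<in> {1..n}" and j: "j \<in> {1..n}"
    have old: "(real (t i) - aw) * w j \<le> (real (t j) + 1 - aw) * w i"
      using it i j unfolding inv_wr_def by blast
    have wi: "w i \<ge> 0" and wj: "w j \<ge> 0" using wnn i j by auto
    show "(real (t' i) - aw) * w j \<le> (real (t' j) + 1 - aw) * w i"
    proof (cases "i = i0")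
      case True
      show ?thesis
      proof (cases "j = i0")
        case True
        with \<open>i = i0\<close> show ?thesis using wi by (simp add: t'_def algebra_simps)
      next
        case False
        have tj: "t' j = t j" using False by (simp add: t'_def)
        have ti: "real (t' i) = real (t i0) + 1" using True by (simp add: t'_def)
        show ?thesis
        proof (cases "w j > 0")
          case True
          hence "j \<in> P" using j unfolding P_def by simp
          hence "f i0 \<le> f j" by (rule minf)
          hence "(real (t i0) + 1 - aw) / w i0 \<le> (real (t j) + 1 - aw) / w j"
            unfolding f_def .
          hence "(real (t i0) + 1 - aw) * w j \<le> (real (t j) + 1 - aw) * w i0"
            using wi0 True by (simp add: divide_simps mult.commute)
          then show ?thesis using ti tj \<open>i = i0\<close> by simp
        next
          case False
          hence "w j = 0" using wj by simp
          moreover have "(real (t j) + 1 - aw) * w i \<ge> 0" using wi aw1 by simp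
          ultimately show ?thesis using tj by simp
        qed
      qed
    next
      case False
      have ti: "t' i = t i" using False by (simp add: t'_def)
      have "real (t j) \<le> real (t' j)" by (simp add: t'_def)
      hence "(real (t j) + 1 - aw) * w i \<le> (real (t' j) + 1 - aw) * w i"
        using wi by (simp add: mult_right_mono)
      then show ?thesis using old ti by simp
    qed
  qed
  then show ?case using s' by blast
qed

lemma arith_final:
  fixes a T p q W aw an k1 k2 n :: real
  assumes "a * W - T * p \<le> aw * k1 * q + (1 - aw) * k2 * p"
    and "p + q = W" and "W > 0" and "p \<ge> 0" and "q \<ge> 0" and "p < aw * W"
    and "k1 \<ge> 0" and "k2 \<ge> 0" and "k1 + k2 = n"
    and "T * (an - aw) \<ge> aw * (1 - aw) * n" and "n \<ge> 1"
    and "0 < aw" and "aw < 1" and "aw < an" and "an < 1" and "T \<ge> 0"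
  shows "a < an * T"
proof -
  have h0: "p \<le> aw * (p + q)" using assms by simp
  have h1: "(1 - aw) * p \<le> aw * q" using h0 by (simp add: algebra_simps)
  have "(1 - aw) * k2 * p \<le> aw * k2 * q"
    using mult_left_mono[OF h1 \<open>k2 \<ge> 0\<close>] by (simp add: algebra_simps)
  moreover have "n * aw * q = aw * k1 * q + aw * k2 * q"
    using assms(9)[symmetric] by (simp add: algebra_simps)
  ultimately have h2: "a * W \<le> T * p + n * aw * q" using assms(1) by linarith
  have h3: "an * W - p > 0" using assms
    by (smt (verit) mult_strict_right_mono)
  have h4: "T * (an * W - p) * (an - aw) \<ge> aw * (1 - aw) * n * (an * W - p)"
    using mult_right_mono[OF assms(10), of "an * W - p"] h3 by (simp add: algebra_simps)
  have h5: "aw * (1 - aw) * (an * W - p) > aw * q * (an - aw)"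
  proof -
    have "aw * W * (1 - an) > p * (1 - an)" using assms
      by (simp add: mult_strict_right_mono)
    moreover have "an * p + an * q = an * W" "aw * p + aw * q = aw * W"
      using assms(2) by (auto simp: algebra_simps)
    ultimately have "(1 - aw) * (an * W - p) > q * (an - aw)" by (simp add: algebra_simps)
    thus ?thesis using assms by simp
  qed
  have "n * aw * q * (an - aw) < T * (an * W - p) * (an - aw)"
  proof -
    have "n * (aw * q * (an - aw)) < n * (aw * (1 - aw) * (an * W - p))"
      using h5 assms by simp
    thus ?thesis using h4 by (simp add: algebra_simps)
  qed
  hence "n * aw * q < T * (an * W - p)" using assms by simp
  hence "a * W < an * T * W" using h2 by (simp add: algebra_simps)
  thus ?thesis using assms by simp
qed

theorem theorem1:
  fixes n :: nat and aw an :: real and w :: "nat \<Rightarrow> real"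
  assumes "n \<ge> 1"
    and "0 < aw" and "aw < 1" and "0 < an" and "an < 1" and "aw < an"
    and "\<forall>i\<in>{1..n}. w i \<ge> 0"
    and "(\<Sum>i\<in>{1..n}. w i) \<noteq> 0"
  shows "\<exists>t :: nat \<Rightarrow> nat.
           (\<forall>S. S \<subseteq> {1..n} \<longrightarrow>
              (\<Sum>i\<in>S. w i) < aw * (\<Sum>i\<in>{1..n}. w i) \<longrightarrow>
              real (\<Sum>i\<in>S. t i) < an * real (\<Sum>i\<in>{1..n}. t i))
         \<and> int (\<Sum>i\<in>{1..n}. t i)
             \<le> \<lceil>aw * (1 - aw) / (an - aw) * real n\<rceil>"
proof -
  define K where "K = aw * (1 - aw) / (an - aw) * real n"
  define W where "W = (\<Sum>i\<in>{1..n}. w i)"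
  have Kpos: "K > 0" unfolding K_def using assms by simp
  have W0: "W \<ge> 0" unfolding W_def using assms(7) by (intro sum_nonneg) auto
  hence Wpos: "W > 0" using assms(8) unfolding W_def by simp
  have pos: "\<exists>i\<in>{1..n}. w i > 0"
  proof (rule ccontr)
    assume "\<not> ?thesis"
    hence "\<forall>i\<in>{1..n}. w i = 0" using assms(7) by force
    hence "W = 0" unfolding W_def by simp
    thus False using Wpos by simp
  qed
  define M where "M = nat \<lceil>K\<rceil>"
  have MK: "int M = \<lceil>K\<rceil>" unfolding M_def using Kpos by simp
  have MK2: "real M \<ge> K"
  proof -
    have "real_of_int \<lceil>K\<rceil> \<ge> K" by simp
    thus ?thesis using MK by (metis of_int_of_nat_eq)
  qed
  obtain t where ts: "(\<Sum>i\<in>{1..n}. t i) = M" and it: "inv_wr n aw w t"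
    using greedy[OF assms(2,3,7) pos] by blast
  show ?thesis
  proof (intro exI[of _ t] conjI allI impI)
    show "int (\<Sum>i\<in>{1..n}. t i) \<le> \<lceil>aw * (1 - aw) / (an - aw) * real n\<rceil>"
      using ts MK unfolding K_def by simp
  next
    fix S assume Ssub: "S \<subseteq> {1..n}" and Sw: "(\<Sum>i\<in>S. w i) < aw * (\<Sum>i\<in>{1..n}. w i)"
    define R where "R = {1..n} - S"
    have finS: "finite S" using Ssub finite_subset by blast
    have finR: "finite R" unfolding R_def by simp
    define a where "a = (\<Sum>i\<in>S. real (t i))"
    define b where "b = (\<Sum>i\<in>R. real (t i))"
    define p where "p = (\<Sum>i\<in>S. w i)"
    define q where "q = (\<Sum>i\<in>R. w i)"
    have split: "\<And>g :: nat \<Rightarrow> real. (\<Sum>i\<in>{1..n}. g i) = (\<Sum>i\<in>S. g i) + (\<Sum>i\<in>R. g i)"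
      unfolding R_def using Ssub by (metis finite_atLeastAtMost sum.subset_diff add.commute)
    have pqW: "p + q = W" unfolding p_def q_def W_def using split by simp
    have Tab: "real M = a + b" unfolding a_def b_def using split[of "\<lambda>i. real (t i)"] ts[symmetric] of_nat_sum[of t "{1..n}"] by simp
    have cardn: "real (card S) + real (card R) = real n"
    proof -
      have "card S + card R = card {1..n}" unfolding R_def using Ssub
        by (metis card_Diff_subset finS card_mono finite_atLeastAtMost le_add_diff_inverse)
      thus ?thesis by (metis card_atLeastAtMost diff_Suc_1 of_nat_add)
    qed
    have pw: "(real (t i) - aw) * w j \<le> (real (t j) + 1 - aw) * w i" if "i \<in> S" "j \<in> R" for i j
      using it that Ssub unfolding inv_wr_def R_def by blast
    have "(\<Sum>i\<in>S. \<Sum>j\<in>R. (real (t i) - aw) * w j) \<le> (\<Sum>i\<in>S. \<Sum>j\<in>R. (real (t j) + 1 - aw) * w i)"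
      by (intro sum_mono) (simp add: pw)
    moreover have "(\<Sum>i\<in>S. \<Sum>j\<in>R. (real (t i) - aw) * w j) = (a - aw * card S) * q"
      unfolding a_def q_def by (simp add: sum_product[symmetric] sum_subtractf)
    moreover have "(\<Sum>i\<in>S. \<Sum>j\<in>R. (real (t j) + 1 - aw) * w i) = (b + (1 - aw) * card R) * p"
      unfolding b_def p_def
      by (simp add: sum_product[symmetric] sum.distrib sum_subtractf sum_distrib_left sum_distrib_right algebra_simps)
    ultimately have main: "(a - aw * card S) * q \<le> (b + (1 - aw) * card R) * p" by simp
    have "a * W - real M * p \<le> aw * card S * q + (1 - aw) * card R * p"
    proof -
      have "W * a = a * p + a * q" using pqW[symmetric] by (simp add: algebra_simps)
      thus ?thesis using main Tab by (simp add: algebra_simps)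
    qed
    moreover have "real M * (an - aw) \<ge> aw * (1 - aw) * n"
      using MK2 assms unfolding K_def by (simp add: divide_simps)
    moreover have "p \<ge> 0" unfolding p_def using Ssub assms(7) by (meson subsetD sum_nonneg)
    moreover have "q \<ge> 0" unfolding q_def R_def using assms(7) by (intro sum_nonneg) auto
    moreover have "p < aw * W" using Sw unfolding p_def W_def .
    moreover have "real n \<ge> 1" using assms by simp
    ultimately have "a < an * real M"
      using arith_final[of a W "real M" p aw "real (card S)" q "real (card R)" "real n" an]
        pqW Wpos cardn assms by simp
    thus "real (\<Sum>i\<in>S. t i) < an * real (\<Sum>i\<in>{1..n}. t i)"
      unfolding a_def using ts by simp
  qed
qed

end
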